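(* Let $P$ be a span program on $n$ variables over $\mathbb{C}$ with target vector $t=(1,0,\dots,0)\in\mathbb{C}^m$, grouped input vectors $v_j\in\mathbb{C}^m$ for $j\in J$, and literal sets $X_j$. Let $G_P$ be its associated weighted bipartite graph. Fix an input $x\in\{0,1\}^n$. Define $G_P(x)$ by deleting from $G_P$ every input edge $(a_j,b_i)$ such that the literal of $X_j$ indexed by $i\in I_j$ evaluates to true on $x$. Let $H$ be the Hermitian weighted adjacency matrix of $G_P(x)$. Consider the system of linear equations $\sum_u H_{v,u}\psi(u)=0$ for every vertex $v$ of $G_P(x)$ except $v=a_O$, in the unknown vector $\psi\in\mathbb{C}^{V(G_P)}$. Then: (i) this system has a solution with $\psi(a_O)\neq 0$ if and only if $f_P(x)=1$; (ii) this system has a solution with $\psi(b_O)\neq 0$ if and only if $f_P(x)=0$.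
   Context: A span program $P$ over $\mathbb{C}$ on $n$ Boolean variables consists of a nonzero target vector $t\in\mathbb{C}^m$ and vectors $v_j\in\mathbb{C}^m$ indexed by a finite set $J$. Each $v_j$ is labeled by a subset $X_j$ of the literals $\{x_1,\overline{x_1},\dots,x_n,\overline{x_n}\}$. The function $f_P:\{0,1\}^n\to\{0,1\}$ is defined by $f_P(x)=1$ iff there are coefficients $a_j\in\mathbb{C}$ with $\sum_j a_jv_j=t$ and $a_j=0$ whenever some literal in $X_j$ is false on $x$. For each $j$, let $I_j$ be an index set in bijection with $X_j$, and let $I=\bigsqcup_j I_j$ be their disjoint union. Let $C=\{2,\dots,m\}$ index the coordinates other than the first. The graph $G_P$ has vertex set $\{a_O,b_O\}\cup\{a_j:j\in J\}\cup\{b_c:c\in C\}\cup\{b_i:i\in I\}$. Its weighted edges are: - the output edge $(a_O,b_O)$ with weight $1$; - edges $(b_O,a_j)$ with weight $(v_j)_1$; - edges $(b_c,a_j)$ with weight $(v_j)_c$; - input edges $(a_j,b_i)$ for $i\in I_j$ with weight $1$. The Hermitian weighted adjacency matrix $H$ has $H_{b,a}=w$ and $H_{a,b}=\overline{w}$ for each edge between a $b$-vertex $b$ and an $a$-vertex $a$ of weight $w$. All other entries are $0$. *)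

theory Defs
  imports Complex_Main
begin

text \<open>Literals over variables x_1..x_n: (i, True) is x_i, (i, False) is its negation.
  An input x in {0,1}^n is a function nat => bool (only indices 1..n matter).\<close>

type_synonym literal = "nat \<times> bool"

definition lit_true :: "(nat \<Rightarrow> bool) \<Rightarrow> literal \<Rightarrow> bool" where
  "lit_true x l = (x (fst l) = snd l)"

text \<open>Span program P = (target t in C^m, vectors v_j (coordinates 1..m), j in J,
  literal labels X_j). Its function f_P (True means f_P(x) = 1).\<close>

definition span_fun ::
  "nat \<Rightarrow> (nat \<Rightarrow> complex) \<Rightarrow> 'j set \<Rightarrow> ('j \<Rightarrow> nat \<Rightarrow> complex) \<Rightarrow> ('j \<Rightarrow> literal set)
     \<Rightarrow> (nat \<Rightarrow> bool) \<Rightarrow> bool" where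
  "span_fun m t J v X x \<longleftrightarrow>
     (\<exists>a :: 'j \<Rightarrow> complex.
        (\<forall>c\<in>{1..m}. (\<Sum>j\<in>J. a j * v j c) = t c) \<and>
        (\<forall>j\<in>J. (\<exists>l\<in>X j. \<not> lit_true x l) \<longrightarrow> a j = 0))"

text \<open>Vertices of G_P. The index set I_j is taken to be {j} x X_j, so b_i for i in I_j
  is Bi j l with l in X_j (the literal indexed by i).\<close>

datatype 'j vtx = AO | BO | Aj 'j | Bc nat | Bi 'j literal

definition GP_vertices :: "nat \<Rightarrow> 'j set \<Rightarrow> ('j \<Rightarrow> literal set) \<Rightarrow> 'j vtx set" where
  "GP_vertices m J X =
     {AO, BO} \<union> Aj ` J \<union> Bc ` {2..m} \<union> {Bi j l | j l. j \<in> J \<and> l \<in> X j}"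

fun is_avtx :: "'j vtx \<Rightarrow> bool" where
  "is_avtx AO = True"
| "is_avtx (Aj j) = True"
| "is_avtx _ = False"

fun is_bvtx :: "'j vtx \<Rightarrow> bool" where
  "is_bvtx BO = True"
| "is_bvtx (Bc c) = True"
| "is_bvtx (Bi j l) = True"
| "is_bvtx _ = False"

text \<open>Weight of the edge between b-vertex b and a-vertex a in G_P (0 = no edge).\<close>

fun GP_weight :: "('j \<Rightarrow> nat \<Rightarrow> complex) \<Rightarrow> 'j vtx \<Rightarrow> 'j vtx \<Rightarrow> complex" where
  "GP_weight v BO AO = 1"
| "GP_weight v BO (Aj j) = v j 1"
| "GP_weight v (Bc c) (Aj j) = v j c"
| "GP_weight v (Bi j l) (Aj j') = (if j = j' then 1 else 0)"
| "GP_weight v _ _ = 0"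

fun GPx_weight :: "('j \<Rightarrow> nat \<Rightarrow> complex) \<Rightarrow> (nat \<Rightarrow> bool) \<Rightarrow> 'j vtx \<Rightarrow> 'j vtx \<Rightarrow> complex" where
  "GPx_weight v x (Bi j l) a = (if lit_true x l then 0 else GP_weight v (Bi j l) a)"
| "GPx_weight v x b a = GP_weight v b a"

definition GPx_H :: "('j \<Rightarrow> nat \<Rightarrow> complex) \<Rightarrow> (nat \<Rightarrow> bool) \<Rightarrow> 'j vtx \<Rightarrow> 'j vtx \<Rightarrow> complex" where
  "GPx_H v x r s =
     (if is_bvtx r \<and> is_avtx s then GPx_weight v x r s
      else if is_avtx r \<and> is_bvtx s then cnj (GPx_weight v x s r)
      else 0)"

definition solves_sys ::
  "nat \<Rightarrow> 'j set \<Rightarrow> ('j \<Rightarrow> nat \<Rightarrow> complex) \<Rightarrow> ('j \<Rightarrow> literal set) \<Rightarrow> (nat \<Rightarrow> bool)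
     \<Rightarrow> ('j vtx \<Rightarrow> complex) \<Rightarrow> bool" where
  "solves_sys m J v X x \<psi> \<longleftrightarrow>
     (\<forall>r\<in>GP_vertices m J X - {AO}. (\<Sum>s\<in>GP_vertices m J X. GPx_H v x r s * \<psi> s) = 0)"

end

theory Submission
  imports Defs
begin

lemma sum_V:
  assumes "finite J" "\<forall>j\<in>J. finite (X j)"
  shows "(\<Sum>s\<in>GP_vertices m J X. f s) = f AO + f BO + (\<Sum>j\<in>J. f (Aj j)) + (\<Sum>c\<in>{2..m}. f (Bc c))
     + (\<Sum>j\<in>J. \<Sum>l\<in>X j. f (Bi j l))"
proof -
  have V: "GP_vertices m J X = insert AO (insert BO (Aj ` J \<union> (Bc ` {2..m} \<union> (\<lambda>p. Bi (fst p) (snd p)) ` Sigma J X)))"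
    unfolding GP_vertices_def by (auto simp: image_iff Bex_def)
  have fin: "finite (Sigma J X)" using assms by auto
  have "(\<Sum>p\<in>Sigma J X. f (Bi (fst p) (snd p))) = (\<Sum>j\<in>J. \<Sum>l\<in>X j. f (Bi j l))"
    using assms by (subst sum.Sigma) (auto simp: case_prod_beta)
  moreover have "(\<Sum>s\<in>(\<lambda>p. Bi (fst p) (snd p)) ` Sigma J X. f s) = (\<Sum>p\<in>Sigma J X. f (Bi (fst p) (snd p)))"
    by (rule sum.reindex_cong[where l="\<lambda>p. Bi (fst p) (snd p)"]) (auto simp: inj_on_def)
  moreover have "sum f (Bc ` {2..m} \<union> (\<lambda>p. Bi (fst p) (snd p)) ` Sigma J X)
     = sum f (Bc ` {2..m}) + sum f ((\<lambda>p. Bi (fst p) (snd p)) ` Sigma J X)"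
    by (rule sum.union_disjoint) (use fin in auto)
  moreover have "sum f (Aj ` J \<union> (Bc ` {2..m} \<union> (\<lambda>p. Bi (fst p) (snd p)) ` Sigma J X))
     = sum f (Aj ` J) + sum f (Bc ` {2..m} \<union> (\<lambda>p. Bi (fst p) (snd p)) ` Sigma J X)"
    by (rule sum.union_disjoint) (use fin assms in auto)
  moreover have "sum f (Aj ` J) = (\<Sum>j\<in>J. f (Aj j))" by (simp add: sum.reindex inj_on_def)
  moreover have "sum f (Bc ` {2..m}) = (\<Sum>c\<in>{2..m}. f (Bc c))" by (simp add: sum.reindex inj_on_def)
  moreover have "sum f (insert AO (insert BO (Aj ` J \<union> (Bc ` {2..m} \<union> (\<lambda>p. Bi (fst p) (snd p)) ` Sigma J X))))
    = f AO + (f BO + sum f (Aj ` J \<union> (Bc ` {2..m} \<union> (\<lambda>p. Bi (fst p) (snd p)) ` Sigma J X)))"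
    using fin assms by (subst sum.insert; auto)+
  ultimately show ?thesis unfolding V
    by (simp add: add.assoc) 
qed

lemma row_BO: assumes "finite J" "\<forall>j\<in>J. finite (X j)"
  shows "(\<Sum>s\<in>GP_vertices m J X. GPx_H v x BO s * \<psi> s) = \<psi> AO + (\<Sum>j\<in>J. v j 1 * \<psi> (Aj j))"
  using assms by (simp add: sum_V GPx_H_def)

lemma row_Bc: assumes "finite J" "\<forall>j\<in>J. finite (X j)"
  shows "(\<Sum>s\<in>GP_vertices m J X. GPx_H v x (Bc c) s * \<psi> s) = (\<Sum>j\<in>J. v j c * \<psi> (Aj j))"
  using assms by (simp add: sum_V GPx_H_def)

lemma row_Bi: assumes "finite J" "\<forall>j\<in>J. finite (X j)" "j \<in> J"
  shows "(\<Sum>s\<in>GP_vertices m J X. GPx_H v x (Bi j l) s * \<psi> s) = (if lit_true x l then 0 else \<psi> (Aj j))"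
proof -
  have "(\<Sum>ja\<in>J. (if j = ja then 1 else 0) * \<psi> (Aj ja)) = (\<Sum>ja\<in>J. if j = ja then \<psi> (Aj ja) else 0)"
    by (rule sum.cong) auto
  also have "\<dots> = \<psi> (Aj j)" using assms by (simp add: sum.delta)
  finally show ?thesis using assms by (simp add: sum_V GPx_H_def)
qed

lemma row_Aj: assumes "finite J" "\<forall>j\<in>J. finite (X j)" "j \<in> J"
  shows "(\<Sum>s\<in>GP_vertices m J X. GPx_H v x (Aj j) s * \<psi> s) =
    cnj (v j 1) * \<psi> BO + (\<Sum>c\<in>{2..m}. cnj (v j c) * \<psi> (Bc c)) + (\<Sum>l\<in>X j. if lit_true x l then 0 else \<psi> (Bi j l))"
proof -
  have "(\<Sum>j'\<in>J. \<Sum>l\<in>X j'. GPx_H v x (Aj j) (Bi j' l) * \<psi> (Bi j' l))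
     = (\<Sum>j'\<in>J. if j = j' then (\<Sum>l\<in>X j'. if lit_true x l then 0 else \<psi> (Bi j' l)) else 0)"
    by (rule sum.cong) (auto simp: GPx_H_def intro!: sum.cong sum.neutral)
  also have "\<dots> = (\<Sum>l\<in>X j. if lit_true x l then 0 else \<psi> (Bi j l))"
    using assms by (simp add: sum.delta)
  finally show ?thesis using assms by (simp add: sum_V GPx_H_def)
qed

lemma ball_V: "(\<forall>r\<in>GP_vertices m J X - {AO}. P r) \<longleftrightarrow>
   P BO \<and> (\<forall>j\<in>J. P (Aj j)) \<and> (\<forall>c\<in>{2..m}. P (Bc c)) \<and> (\<forall>j\<in>J. \<forall>l\<in>X j. P (Bi j l))"
  unfolding GP_vertices_def by auto

lemma solves_iff: assumes "finite J" "\<forall>j\<in>J. finite (X j)"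
  shows "solves_sys m J v X x \<psi> \<longleftrightarrow>
    (\<psi> AO + (\<Sum>j\<in>J. v j 1 * \<psi> (Aj j)) = 0) \<and>
    (\<forall>j\<in>J. cnj (v j 1) * \<psi> BO + (\<Sum>c\<in>{2..m}. cnj (v j c) * \<psi> (Bc c)) + (\<Sum>l\<in>X j. if lit_true x l then 0 else \<psi> (Bi j l)) = 0) \<and>
    (\<forall>c\<in>{2..m}. (\<Sum>j\<in>J. v j c * \<psi> (Aj j)) = 0) \<and>
    (\<forall>j\<in>J. \<forall>l\<in>X j. \<not> lit_true x l \<longrightarrow> \<psi> (Aj j) = 0)"
  unfolding solves_sys_def ball_V using assms
  by (simp add: row_BO row_Bc row_Bi row_Aj)

definition dotp :: "nat \<Rightarrow> (nat \<Rightarrow> complex) \<Rightarrow> (nat \<Rightarrow> complex) \<Rightarrow> complex" where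
  "dotp m w u = (\<Sum>c\<in>{1..m}. w c * u c)"

lemma dotp_lin_left: "dotp m (\<lambda>c. f c - \<alpha> * g c) u = dotp m f u - \<alpha> * dotp m g u"
  unfolding dotp_def by (simp add: algebra_simps sum_subtractf sum_distrib_left)

lemma dotp_lin_right: "dotp m w (\<lambda>c. f c - \<alpha> * g c) = dotp m w f - \<alpha> * dotp m w g"
  unfolding dotp_def by (simp add: algebra_simps sum_subtractf sum_distrib_left)

lemma separation:
  assumes "finite S"
  shows "(\<exists>a. \<forall>c\<in>{1..m}. (\<Sum>j\<in>S. a j * v j c) = t c) \<or> (\<exists>w. dotp m w t \<noteq> 0 \<and> (\<forall>j\<in>S. dotp m w (v j) = 0))"
  using assms
proof (induction S arbitrary: t rule: finite_induct)
  case empty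
  show ?case
  proof (cases "\<forall>c\<in>{1..m}. t c = 0")
    case True then show ?thesis by auto
  next
    case False
    then obtain c0 where c0: "c0 \<in> {1..m}" "t c0 \<noteq> 0" by auto
    have "dotp m (\<lambda>c. if c = c0 then 1 else 0) t = t c0"
    proof -
      have "dotp m (\<lambda>c. if c = c0 then 1 else 0) t = (\<Sum>c\<in>{1..m}. if c = c0 then t c else 0)"
        unfolding dotp_def by (rule sum.cong) auto
      also have "\<dots> = t c0" using c0 by (simp add: sum.delta')
      finally show ?thesis .
    qed
    then show ?thesis using c0 by auto
  qed
next
  case (insert j0 S)
  from insert.IH[of t] show ?case
  proof
    assume "\<exists>a. \<forall>c\<in>{1..m}. (\<Sum>j\<in>S. a j * v j c) = t c"
    then obtain a where a: "\<forall>c\<in>{1..m}. (\<Sum>j\<in>S. a j * v j c) = t c" by blast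
    have "\<forall>c\<in>{1..m}. (\<Sum>j\<in>insert j0 S. (a(j0 := 0)) j * v j c) = t c"
    proof
      fix c assume c: "c \<in> {1..m}"
      have "(\<Sum>j\<in>insert j0 S. (a(j0 := 0)) j * v j c) = (\<Sum>j\<in>S. (a(j0 := 0)) j * v j c)"
        using insert.hyps by simp
      also have "\<dots> = (\<Sum>j\<in>S. a j * v j c)"
        using insert.hyps by (intro sum.cong) auto
      finally show "(\<Sum>j\<in>insert j0 S. (a(j0 := 0)) j * v j c) = t c" using a c by simp
    qed
    then show ?thesis by blast
  next
    assume "\<exists>w. dotp m w t \<noteq> 0 \<and> (\<forall>j\<in>S. dotp m w (v j) = 0)"
    then obtain w where w: "dotp m w t \<noteq> 0" "\<forall>j\<in>S. dotp m w (v j) = 0" by blast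
    show ?thesis
    proof (cases "dotp m w (v j0) = 0")
      case True then show ?thesis using w by auto
    next
      case False
      define k where "k = dotp m w t / dotp m w (v j0)"
      define t' where "t' = (\<lambda>c. t c - k * v j0 c)"
      from insert.IH[of t'] show ?thesis
      proof
        assume "\<exists>a. \<forall>c\<in>{1..m}. (\<Sum>j\<in>S. a j * v j c) = t' c"
        then obtain a where a: "\<forall>c\<in>{1..m}. (\<Sum>j\<in>S. a j * v j c) = t' c" by blast
        have "\<forall>c\<in>{1..m}. (\<Sum>j\<in>insert j0 S. (a(j0 := k)) j * v j c) = t c"
        proof
          fix c assume c: "c \<in> {1..m}"
          have "(\<Sum>j\<in>insert j0 S. (a(j0 := k)) j * v j c) = k * v j0 c + (\<Sum>j\<in>S. (a(j0 := k)) j * v j c)"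
            using insert.hyps by simp
          also have "(\<Sum>j\<in>S. (a(j0 := k)) j * v j c) = (\<Sum>j\<in>S. a j * v j c)"
            using insert.hyps by (intro sum.cong) auto
          finally show "(\<Sum>j\<in>insert j0 S. (a(j0 := k)) j * v j c) = t c" using a c by (simp add: t'_def)
        qed
        then show ?thesis by blast
      next
        assume "\<exists>w. dotp m w t' \<noteq> 0 \<and> (\<forall>j\<in>S. dotp m w (v j) = 0)"
        then obtain w' where w': "dotp m w' t' \<noteq> 0" "\<forall>j\<in>S. dotp m w' (v j) = 0" by blast
        define \<alpha> where "\<alpha> = dotp m w' (v j0) / dotp m w (v j0)"
        define w'' where "w'' = (\<lambda>c. w' c - \<alpha> * w c)"
        have 1: "dotp m w'' (v j0) = 0"
          unfolding w''_def dotp_lin_left \<alpha>_def using False by simp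
        have 2: "\<forall>j\<in>S. dotp m w'' (v j) = 0"
          unfolding w''_def dotp_lin_left using w w' by simp
        have "dotp m w' t' = dotp m w' t - k * dotp m w' (v j0)"
          unfolding t'_def dotp_lin_right ..
        also have "\<dots> = dotp m w'' t"
          unfolding w''_def dotp_lin_left \<alpha>_def k_def using False by (simp add: field_simps)
        finally have "dotp m w'' t \<noteq> 0" using w' by simp
        then show ?thesis using 1 2 by auto
      qed
    qed
  qed
qed

theorem theorem2p5:
  fixes n m :: nat and J :: "'j set" and v :: "'j \<Rightarrow> nat \<Rightarrow> complex"
    and X :: "'j \<Rightarrow> literal set" and x :: "nat \<Rightarrow> bool"
  assumes "finite J" and "1 \<le> m"
    and "\<forall>j\<in>J. X j \<subseteq> {1..n} \<times> UNIV"
  shows "((\<exists>\<psi>. solves_sys m J v X x \<psi> \<and> \<psi> AO \<noteq> 0)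
           \<longleftrightarrow> span_fun m (\<lambda>c. if c = 1 then 1 else 0) J v X x)
     \<and> ((\<exists>\<psi>. solves_sys m J v X x \<psi> \<and> \<psi> BO \<noteq> 0)
           \<longleftrightarrow> \<not> span_fun m (\<lambda>c. if c = 1 then 1 else 0) J v X x)"
proof -
  define T :: "nat \<Rightarrow> complex" where "T = (\<lambda>c. if c = 1 then 1 else 0)"
  have finX: "\<forall>j\<in>J. finite (X j)"
  proof
    fix j assume "j \<in> J"
    then have "X j \<subseteq> {1..n} \<times> UNIV" using assms(3) by blast
    moreover have "finite ({1..n} \<times> (UNIV :: bool set))" by simp
    ultimately show "finite (X j)" by (rule finite_subset)
  qed
  note S = solves_iff[OF assms(1) finX]
  have m1: "1 \<in> {1..m}" using assms(2) by simp
  have sub: "{2..m} \<subseteq> {1..m}" by auto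
  have I1: "(\<exists>\<psi>. solves_sys m J v X x \<psi> \<and> \<psi> AO \<noteq> 0) \<Longrightarrow> span_fun m T J v X x"
  proof -
    assume "\<exists>\<psi>. solves_sys m J v X x \<psi> \<and> \<psi> AO \<noteq> 0"
    then obtain \<psi> where sol: "solves_sys m J v X x \<psi>" and nz: "\<psi> AO \<noteq> 0" by blast
    note E = sol[unfolded S]
    define a where "a j = - \<psi> (Aj j) / \<psi> AO" for j
    have sa: "(\<Sum>j\<in>J. a j * v j c) = (\<Sum>j\<in>J. v j c * \<psi> (Aj j)) * (-1 / \<psi> AO)" for c
      unfolding sum_distrib_right by (rule sum.cong) (auto simp: a_def)
    have "\<forall>c\<in>{1..m}. (\<Sum>j\<in>J. a j * v j c) = T c"
    proof
      fix c assume c: "c \<in> {1..m}"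
      show "(\<Sum>j\<in>J. a j * v j c) = T c"
      proof (cases "c = 1")
        case True
        have "(\<Sum>j\<in>J. v j 1 * \<psi> (Aj j)) = - \<psi> AO" using E by (metis add.commute add_eq_0_iff2)
        then show ?thesis using True nz by (simp add: sa T_def)
      next
        case False
        then have "c \<in> {2..m}" using c by auto
        then show ?thesis using E False by (simp add: sa T_def)
      qed
    qed
    moreover have "\<forall>j\<in>J. (\<exists>l\<in>X j. \<not> lit_true x l) \<longrightarrow> a j = 0"
      using E by (auto simp: a_def)
    ultimately show ?thesis unfolding span_fun_def by blast
  qed
  have I2: "span_fun m T J v X x \<Longrightarrow> (\<exists>\<psi>. solves_sys m J v X x \<psi> \<and> \<psi> AO \<noteq> 0)"
  proof -
    assume "span_fun m T J v X x"
    then obtain a where a1: "\<forall>c\<in>{1..m}. (\<Sum>j\<in>J. a j * v j c) = T c"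
      and a2: "\<forall>j\<in>J. (\<exists>l\<in>X j. \<not> lit_true x l) \<longrightarrow> a j = 0"
      unfolding span_fun_def by blast
    define \<psi> :: "'j vtx \<Rightarrow> complex" where "\<psi> s = (case s of AO \<Rightarrow> -1 | Aj j \<Rightarrow> a j | _ \<Rightarrow> 0)" for s
    have "(\<Sum>j\<in>J. v j 1 * a j) = 1" using a1 m1 by (simp add: T_def mult.commute)
    moreover have "\<forall>c\<in>{2..m}. (\<Sum>j\<in>J. v j c * a j) = 0" using a1 sub by (auto simp: T_def mult.commute)
    ultimately have "solves_sys m J v X x \<psi>" unfolding S using a2 by (auto simp: \<psi>_def intro!: sum.neutral)
    then show ?thesis by (auto simp: \<psi>_def)
  qed
  have II1: "(\<exists>\<psi>. solves_sys m J v X x \<psi> \<and> \<psi> BO \<noteq> 0) \<Longrightarrow> \<not> span_fun m T J v X x"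
  proof
    assume "\<exists>\<psi>. solves_sys m J v X x \<psi> \<and> \<psi> BO \<noteq> 0"
    then obtain \<psi> where sol: "solves_sys m J v X x \<psi>" and nz: "\<psi> BO \<noteq> 0" by blast
    note E = sol[unfolded S]
    assume "span_fun m T J v X x"
    then obtain a where a1: "\<forall>c\<in>{1..m}. (\<Sum>j\<in>J. a j * v j c) = T c"
      and a2: "\<forall>j\<in>J. (\<exists>l\<in>X j. \<not> lit_true x l) \<longrightarrow> a j = 0"
      unfolding span_fun_def by blast
    define R where "R j = cnj (v j 1) * \<psi> BO + (\<Sum>c\<in>{2..m}. cnj (v j c) * \<psi> (Bc c))" for j
    have z: "cnj (a j) * R j = 0" if j: "j \<in> J" for j
    proof (cases "\<exists>l\<in>X j. \<not> lit_true x l")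
      case True then show ?thesis using a2 j by simp
    next
      case False
      then have "(\<Sum>l\<in>X j. if lit_true x l then 0 else \<psi> (Bi j l)) = 0" by (auto intro: sum.neutral)
      moreover have "R j + (\<Sum>l\<in>X j. if lit_true x l then 0 else \<psi> (Bi j l)) = 0"
        using E j unfolding R_def by blast
      ultimately have "R j = 0" by simp
      then show ?thesis by simp
    qed
    have "0 = (\<Sum>j\<in>J. cnj (a j) * R j)" using z by (simp add: sum.neutral)
    also have "\<dots> = (\<Sum>j\<in>J. cnj (a j * v j 1) * \<psi> BO + (\<Sum>c\<in>{2..m}. cnj (a j * v j c) * \<psi> (Bc c)))"
    proof (rule sum.cong)
      fix j
      have "cnj (a j) * R j = cnj (a j) * (cnj (v j 1) * \<psi> BO) + cnj (a j) * (\<Sum>c\<in>{2..m}. cnj (v j c) * \<psi> (Bc c))"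
        unfolding R_def by (rule distrib_left)
      also have "cnj (a j) * (\<Sum>c\<in>{2..m}. cnj (v j c) * \<psi> (Bc c)) = (\<Sum>c\<in>{2..m}. cnj (a j * v j c) * \<psi> (Bc c))"
        unfolding sum_distrib_left by (rule sum.cong) (simp_all add: mult.assoc)
      finally show "cnj (a j) * R j = cnj (a j * v j 1) * \<psi> BO + (\<Sum>c\<in>{2..m}. cnj (a j * v j c) * \<psi> (Bc c))"
        by (simp add: mult.assoc)
    qed simp
    also have "\<dots> = (\<Sum>j\<in>J. cnj (a j * v j 1) * \<psi> BO) + (\<Sum>j\<in>J. \<Sum>c\<in>{2..m}. cnj (a j * v j c) * \<psi> (Bc c))"
      by (rule sum.distrib)
    also have "(\<Sum>j\<in>J. \<Sum>c\<in>{2..m}. cnj (a j * v j c) * \<psi> (Bc c)) = (\<Sum>c\<in>{2..m}. \<Sum>j\<in>J. cnj (a j * v j c) * \<psi> (Bc c))"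
      by (rule sum.swap)
    also have "\<dots> = (\<Sum>c\<in>{2..m}. cnj (\<Sum>j\<in>J. a j * v j c) * \<psi> (Bc c))"
      by (simp add: sum_distrib_right cnj_sum)
    also have "\<dots> = 0" using a1 sub by (auto simp: T_def intro!: sum.neutral)
    also have "(\<Sum>j\<in>J. cnj (a j * v j 1) * \<psi> BO) = cnj (\<Sum>j\<in>J. a j * v j 1) * \<psi> BO"
      by (simp add: sum_distrib_right cnj_sum)
    also have "\<dots> = \<psi> BO" using a1 m1 by (simp add: T_def)
    finally show False using nz by simp
  qed
  have II2: "\<not> span_fun m T J v X x \<Longrightarrow> (\<exists>\<psi>. solves_sys m J v X x \<psi> \<and> \<psi> BO \<noteq> 0)"
  proof -
    assume ns: "\<not> span_fun m T J v X x"
    define A where "A = {j\<in>J. \<forall>l\<in>X j. lit_true x l}"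
    have finA: "finite A" using assms(1) by (simp add: A_def)
    from separation[OF finA, of m v T] obtain w where w1: "dotp m w T \<noteq> 0"
      and w2: "\<forall>j\<in>A. dotp m w (v j) = 0"
    proof
      assume "\<exists>a. \<forall>c\<in>{1..m}. (\<Sum>j\<in>A. a j * v j c) = T c"
      then obtain a where a: "\<forall>c\<in>{1..m}. (\<Sum>j\<in>A. a j * v j c) = T c" by blast
      define a' where "a' j = (if j \<in> A then a j else 0)" for j
      have "(\<Sum>j\<in>J. a' j * v j c) = (\<Sum>j\<in>A. a j * v j c)" for c
      proof -
        have "(\<Sum>j\<in>J. a' j * v j c) = (\<Sum>j\<in>J. if j \<in> A then a j * v j c else 0)"
          by (rule sum.cong) (auto simp: a'_def)
        also have "\<dots> = (\<Sum>j\<in>J \<inter> A. a j * v j c)" by (simp add: sum.inter_restrict assms(1))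
        also have "J \<inter> A = A" by (auto simp: A_def)
        finally show ?thesis .
      qed
      then have "span_fun m T J v X x" unfolding span_fun_def using a
        by (intro exI[of _ a']) (auto simp: a'_def A_def)
      then show ?thesis using ns by blast
    qed blast
    have w1': "w 1 \<noteq> 0"
    proof -
      have "dotp m w T = (\<Sum>c\<in>{1..m}. if c = 1 then w c else 0)"
        unfolding dotp_def T_def by (rule sum.cong) auto
      also have "\<dots> = w 1" using m1 by (simp add: sum.delta')
      finally show ?thesis using w1 by simp
    qed
    define R where "R j = cnj (v j 1) * cnj (w 1) + (\<Sum>c\<in>{2..m}. cnj (v j c) * cnj (w c))" for j
    have R: "R j = cnj (dotp m w (v j))" for j
    proof -
      have "dotp m w (v j) = w 1 * v j 1 + (\<Sum>c\<in>{2..m}. w c * v j c)"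
        unfolding dotp_def using assms(2) by (simp add: sum.atLeast_Suc_atMost numeral_2_eq_2)
      then show ?thesis by (simp add: R_def cnj_sum mult.commute)
    qed
    define L where "L j = (SOME l. l \<in> X j \<and> \<not> lit_true x l)" for j
    define \<psi> :: "'j vtx \<Rightarrow> complex" where "\<psi> s = (case s of BO \<Rightarrow> cnj (w 1) | Bc c \<Rightarrow> cnj (w c)
       | Bi j l \<Rightarrow> (if l = L j then - R j else 0) | _ \<Rightarrow> 0)" for s
    have Aj: "R j + (\<Sum>l\<in>X j. if lit_true x l then 0 else \<psi> (Bi j l)) = 0" if j: "j \<in> J" for j
    proof (cases "j \<in> A")
      case True
      then have "(\<Sum>l\<in>X j. if lit_true x l then 0 else \<psi> (Bi j l)) = 0" by (auto simp: A_def intro: sum.neutral)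
      moreover have "R j = 0" using True w2 R by simp
      ultimately show ?thesis by simp
    next
      case False
      then have "\<exists>l. l \<in> X j \<and> \<not> lit_true x l" using j by (auto simp: A_def)
      then have L: "L j \<in> X j" "\<not> lit_true x (L j)" unfolding L_def by (metis (mono_tags, lifting) someI_ex)+
      have "(\<Sum>l\<in>X j. if lit_true x l then 0 else \<psi> (Bi j l)) = (\<Sum>l\<in>X j. if l = L j then - R j else 0)"
        by (rule sum.cong) (use L in \<open>auto simp: \<psi>_def\<close>)
      also have "\<dots> = - R j" using L finX j by (simp add: sum.delta')
      finally show ?thesis by simp
    qed
    have "solves_sys m J v X x \<psi>" unfolding S
      using Aj by (simp add: \<psi>_def R_def)
    then show ?thesis using w1' by (auto simp: \<psi>_def)
  qed
  show ?thesis using I1 I2 II1 II2 unfolding T_def by blast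
qed

end
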